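(* Let $a\geq 3$ and $m\geq 2a^2-a+2$ be integers, and suppose $[C(m,a)]$ is colored with red and blue so that there is no monochromatic solution of $L(m,a)$ in $[C(m,a)]$, with $a-2$ red and $a-1$ blue. Then $m-2$ is red and $m-3$ is blue.
   Context: For integers $m\geq 3$, $a\geq 1$, $L(m,a)$ denotes the equation $x_1+x_2+\cdots+x_{m-1}=a x_m$. For a positive integer $n$, $[n]=\{1,\dots,n\}$. A solution of $L(m,a)$ in $[n]$ is an $m$-tuple $(x_1,\dots,x_m)\in[n]^m$ (entries not necessarily distinct) satisfying the equation; given a 2-coloring of $[n]$, it is monochromatic if all $x_i$ have the same color. $C(m,a)$ denotes $\left\lceil \frac{m-1}{a}\left\lceil \frac{m-1}{a}\right\rceil\right\rceil$. *)

theory Defs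
  imports Main Complex_Main
begin

definition Cma :: "nat \<Rightarrow> nat \<Rightarrow> nat" where
  "Cma m a = nat \<lceil>(real (m - 1) / real a) * real_of_int \<lceil>real (m - 1) / real a\<rceil>\<rceil>"

definition is_solution :: "nat \<Rightarrow> nat \<Rightarrow> nat \<Rightarrow> (nat \<Rightarrow> nat) \<Rightarrow> bool" where
  "is_solution m a n x \<longleftrightarrow>
     (\<forall>i<m. x i \<in> {1..n}) \<and> (\<Sum>i<m - 1. x i) = a * x (m - 1)"

text \<open>A 2-coloring is c :: nat \<Rightarrow> bool (True = red, False = blue), only its values on [n] matter.\<close>
definition monochromatic :: "nat \<Rightarrow> (nat \<Rightarrow> bool) \<Rightarrow> (nat \<Rightarrow> nat) \<Rightarrow> bool" where
  "monochromatic m c x \<longleftrightarrow> (\<forall>i<m. \<forall>j<m. c (x i) = c (x j))"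

definition no_mono_solution :: "nat \<Rightarrow> nat \<Rightarrow> nat \<Rightarrow> (nat \<Rightarrow> bool) \<Rightarrow> bool" where
  "no_mono_solution m a n c \<longleftrightarrow>
     \<not> (\<exists>x. is_solution m a n x \<and> monochromatic m c x)"

end

theory Submission
  imports Defs
begin

lemma Cma_ge:
  fixes m a :: nat
  assumes "a \<ge> 1" and "m - 1 \<ge> a^2"
  shows "m - 1 \<le> Cma m a"
proof -
  define r where "r = real (m - 1) / real a"
  have ap: "real a > 0" using assms by simp
  have "real (a^2) \<le> real (m - 1)" using assms(2) by linarith
  hence a2: "real a * real a \<le> real (m - 1)" by (simp add: power2_eq_square)
  have r0: "r \<ge> 0" unfolding r_def by simp
  have "r * r = real (m-1) * real (m-1) / (real a * real a)" unfolding r_def by simp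
  also have "\<dots> \<ge> real (m - 1)"
  proof -
    have "real (m-1) * (real a * real a) \<le> real (m-1) * real (m-1)"
      using a2 by (intro mult_left_mono) auto
    thus ?thesis using ap by (simp add: pos_le_divide_eq)
  qed
  finally have rr: "real (m - 1) \<le> r * r" .
  have "r * r \<le> r * real_of_int \<lceil>r\<rceil>"
    using r0 by (intro mult_left_mono) auto
  hence "real (m - 1) \<le> r * real_of_int \<lceil>r\<rceil>" using rr by linarith
  hence "int (m - 1) \<le> \<lceil>r * real_of_int \<lceil>r\<rceil>\<rceil>"
    using ceiling_mono[of "real (m - 1)" "r * real_of_int \<lceil>r\<rceil>"] by simp
  thus ?thesis unfolding Cma_def r_def[symmetric] by linarith
qed

lemma aux1: "(a::nat) \<ge> 1 \<Longrightarrow> p + p * (a - 1) = a * p"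
  by (cases a) (simp_all add: algebra_simps)

lemma aux2: "(a::nat) \<ge> 2 \<Longrightarrow> p + p + p * (a - 2) = a * p"
  by (cases a; cases "a - 1") (simp_all add: algebra_simps)

theorem lemma2:
  fixes m a :: nat and red :: "nat \<Rightarrow> bool"
  assumes "a \<ge> 3"
    and "m \<ge> 2 * a^2 - a + 2"
    and "no_mono_solution m a (Cma m a) red"
    and "red (a - 2)"
    and "\<not> red (a - 1)"
  shows "red (m - 2) \<and> \<not> red (m - 3)"
proof -
  have "a^2 \<ge> a" by (simp add: power2_eq_square)
  hence ma: "m - 1 \<ge> a^2" using assms(1,2) by linarith
  have aa: "a^2 \<ge> 9" using mult_le_mono[OF assms(1) assms(1)] by (simp add: power2_eq_square)
  hence m5: "m \<ge> 10" using ma by linarith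
  have am: "a \<le> m - 1" using ma \<open>a^2 \<ge> a\<close> by linarith
  have Cb: "m - 1 \<le> Cma m a" using Cma_ge[OF _ ma] assms(1) by simp
  obtain k where k: "m - 1 = Suc (Suc k)" using m5 by (intro that[of "m - 3"]) arith
  have km: "k = m - 3" using k by simp
  have A: "red (m - 2)"
  proof (rule ccontr)
    assume nr: "\<not> red (m - 2)"
    define x where "x = (\<lambda>i. if i = 0 then m - 2 else if i = m - 1 then m - 2 else a - 1)"
    have s: "(\<Sum>i<m - 1. x i) = a * x (m - 1)"
    proof -
      have "(\<Sum>i<m - 1. x i) = x 0 + (\<Sum>i<Suc k. x (Suc i))"
        unfolding k by (rule sum.lessThan_Suc_shift)
      also have "(\<Sum>i<Suc k. x (Suc i)) = (\<Sum>i<Suc k. a - 1)"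
        by (rule sum.cong) (insert k, auto simp: x_def)
      finally have "(\<Sum>i<m - 1. x i) = x 0 + Suc k * (a - 1)" by simp
      moreover have "Suc k = m - 2" "x 0 = m - 2" using k by (auto simp: x_def)
      ultimately have "(\<Sum>i<m - 1. x i) = (m - 2) + (m - 2) * (a - 1)" by simp
      also have "\<dots> = a * (m - 2)" using assms(1) by (intro aux1) simp
      finally show ?thesis using m5 by (simp add: x_def)
    qed
    have sol: "is_solution m a (Cma m a) x"
      unfolding is_solution_def using s Cb m5 assms(1) am by (auto simp: x_def; arith)
    have "monochromatic m red x"
      unfolding monochromatic_def using nr assms(5) by (auto simp: x_def)
    thus False using sol assms(3) unfolding no_mono_solution_def by blast
  qed
  have B: "\<not> red (m - 3)"
  proof
    assume nr: "red (m - 3)"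
    define x where "x = (\<lambda>i. if i < 2 then m - 3 else if i = m - 1 then m - 3 else a - 2)"
    have s: "(\<Sum>i<m - 1. x i) = a * x (m - 1)"
    proof -
      have "(\<Sum>i<m - 1. x i) = x 0 + (x 1 + (\<Sum>i<k. x (Suc (Suc i))))"
        unfolding k by (simp only: sum.lessThan_Suc_shift One_nat_def)
      also have "(\<Sum>i<k. x (Suc (Suc i))) = (\<Sum>i<k. a - 2)"
        by (rule sum.cong) (insert k, auto simp: x_def)
      finally have "(\<Sum>i<m - 1. x i) = x 0 + (x 1 + k * (a - 2))" by simp
      moreover have "k = m - 3" "x 0 = m - 3" "x 1 = m - 3" using k by (auto simp: x_def)
      ultimately have "(\<Sum>i<m - 1. x i) = (m - 3) + (m - 3) + (m - 3) * (a - 2)" by simp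
      also have "\<dots> = a * (m - 3)" using assms(1) by (intro aux2) simp
      finally show ?thesis using m5 by (simp add: x_def)
    qed
    have sol: "is_solution m a (Cma m a) x"
      unfolding is_solution_def using s Cb m5 assms(1) am by (auto simp: x_def; arith)
    have "monochromatic m red x"
      unfolding monochromatic_def using nr assms(4) by (auto simp: x_def)
    thus False using sol assms(3) unfolding no_mono_solution_def by blast
  qed
  show ?thesis using A B by blast
qed

end
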